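(* Let $\mathcal A\in\mathbb C^{n\times n}$ be nonsingular and positive definite, suppose $\mathcal A=\mathcal P_1+\mathcal P_2$ with $\mathcal P_1,\mathcal P_2$ positive semidefinite, and let $\Sigma$ be Hermitian positive definite. Let $\Gamma_{\mathrm{PPS}}=(\Sigma+\mathcal P_1)^{-1}(\Sigma-\mathcal P_2)(\Sigma+\mathcal P_2)^{-1}(\Sigma-\mathcal P_1)$. If one of the following conditions holds, then $\rho(\Gamma_{\mathrm{PPS}})<1$: (1) $\mathrm{ev}(\Gamma_{\mathrm{PPS}})\cap\mathrm{null}(\mathcal P_1+\mathcal P_1^* )\subseteq\mathrm{null}(\mathcal P_1)$; (2) $\mathrm{ev}(\Gamma_{\mathrm{PPS}})\subseteq\mathrm{null}(\mathcal P_1)\cup\mathrm{null}(\mathcal P_2+\mathcal P_2^* )$.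
   Context: A matrix $\mathcal P\in\mathbb C^{n\times n}$ is called positive semidefinite if $\mathcal P+\mathcal P^*$ is Hermitian positive semidefinite, and positive definite if $\mathcal P+\mathcal P^*$ is Hermitian positive definite; $\mathcal P$ need not be Hermitian. $\rho(\cdot)$ is the spectral radius, $\mathrm{null}(\cdot)$ the null space, and $\mathrm{ev}(M)$ the set of all nonzero eigenvectors of a square matrix $M$. *)

theory Defs
  imports "Jordan_Normal_Form.Spectral_Radius" "Jordan_Normal_Form.Schur_Decomposition"
          "Jordan_Normal_Form.Gauss_Jordan_Elimination" "Jordan_Normal_Form.Matrix_Kernel"
begin

definition herm_psd :: "nat \<Rightarrow> complex mat \<Rightarrow> bool" where
  "herm_psd n H \<longleftrightarrow> H \<in> carrier_mat n n \<and> mat_adjoint H = H \<and>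
     (\<forall>v \<in> carrier_vec n. 0 \<le> Re (conjugate v \<bullet> (H *\<^sub>v v)))"

definition herm_pd :: "nat \<Rightarrow> complex mat \<Rightarrow> bool" where
  "herm_pd n H \<longleftrightarrow> H \<in> carrier_mat n n \<and> mat_adjoint H = H \<and>
     (\<forall>v \<in> carrier_vec n. v \<noteq> 0\<^sub>v n \<longrightarrow> 0 < Re (conjugate v \<bullet> (H *\<^sub>v v)))"

(* the paper's (non-Hermitian) notions: P is PSD / PD iff P + P^* is Hermitian PSD / PD *)
definition pos_semidef :: "nat \<Rightarrow> complex mat \<Rightarrow> bool" where
  "pos_semidef n P \<longleftrightarrow> P \<in> carrier_mat n n \<and> herm_psd n (P + mat_adjoint P)"

definition pos_def :: "nat \<Rightarrow> complex mat \<Rightarrow> bool" where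
  "pos_def n P \<longleftrightarrow> P \<in> carrier_mat n n \<and> herm_pd n (P + mat_adjoint P)"

definition ev :: "complex mat \<Rightarrow> complex vec set" where
  "ev M = {v. \<exists>k. eigenvector M v k}"

(* matrix inverse (meaningful for nonsingular square matrices) *)
definition minv :: "complex mat \<Rightarrow> complex mat" where
  "minv M = the (mat_inverse M)"

definition Gamma_PPS :: "complex mat \<Rightarrow> complex mat \<Rightarrow> complex mat \<Rightarrow> complex mat" where
  "Gamma_PPS \<Sigma> P1 P2 = minv (\<Sigma> + P1) * (\<Sigma> - P2) * minv (\<Sigma> + P2) * (\<Sigma> - P1)"

end

theory Submission
  imports Defs
begin

lemma adj_carrier: "M \<in> carrier_mat n n \<Longrightarrow> mat_adjoint M \<in> carrier_mat n n"
  unfolding mat_adjoint_def by auto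

lemma adj_entry: "M \<in> carrier_mat n n \<Longrightarrow> i < n \<Longrightarrow> j < n \<Longrightarrow>
   mat_adjoint M $$ (i,j) = cnj (M $$ (j,i))"
  unfolding mat_adjoint_def by (auto simp: mat_of_rows_def)

lemma adj:
  fixes M :: "complex mat"
  assumes M: "M \<in> carrier_mat n n" and x: "x \<in> carrier_vec n" and y: "y \<in> carrier_vec n"
  shows "conjugate (M *\<^sub>v x) \<bullet> y = conjugate x \<bullet> (mat_adjoint M *\<^sub>v y)"
proof -
  have "conjugate (M *\<^sub>v x) \<bullet> y = (\<Sum>i<n. (\<Sum>j<n. cnj (M $$ (i,j)) * cnj (x $ j)) * y $ i)"
    using M x y by (auto simp: scalar_prod_def mult_mat_vec_def row_def lessThan_atLeast0 sum_conjugate)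
  also have "\<dots> = (\<Sum>i<n. \<Sum>j<n. cnj (x $ j) * (cnj (M $$ (i,j)) * y $ i))"
    by (simp add: sum_distrib_left sum_distrib_right mult_ac)
  also have "\<dots> = (\<Sum>j<n. \<Sum>i<n. cnj (x $ j) * (cnj (M $$ (i,j)) * y $ i))"
    by (rule sum.swap)
  also have "\<dots> = conjugate x \<bullet> (mat_adjoint M *\<^sub>v y)"
    using M x y adj_carrier[OF M] by (auto simp: scalar_prod_def mult_mat_vec_def row_def lessThan_atLeast0 adj_entry sum_distrib_left intro!: sum.cong)
  finally show ?thesis .
qed

lemma cs:
  fixes a b :: "complex vec"
  assumes "a \<in> carrier_vec n" "b \<in> carrier_vec n"
  shows "conjugate a \<bullet> b = cnj (conjugate b \<bullet> a)"
proof -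
  have "cnj (conjugate b \<bullet> a) = conjugate (conjugate b \<bullet> a)" by simp
  also have "\<dots> = b \<bullet>c a" using assms by (intro conjugate_conjugate_sprod[of b n a])
  also have "\<dots> = conjugate a \<bullet> b" using assms by (intro conjugate_vec_sprod_comm[of b n a])
  finally show ?thesis by simp
qed

lemma conj_minus_vec: "a \<in> carrier_vec n \<Longrightarrow> b \<in> carrier_vec n \<Longrightarrow>
  conjugate (a - b) = conjugate a - (conjugate b :: complex vec)"
  by (intro eq_vecI) auto

lemma ipL_add: "a \<in> carrier_vec n \<Longrightarrow> b \<in> carrier_vec n \<Longrightarrow> c \<in> carrier_vec n \<Longrightarrow>
  conjugate (a + b) \<bullet> c = conjugate a \<bullet> c + conjugate b \<bullet> (c :: complex vec)"
  by (simp add: conjugate_add_vec add_scalar_prod_distrib[of _ n])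
lemma ipL_minus: "a \<in> carrier_vec n \<Longrightarrow> b \<in> carrier_vec n \<Longrightarrow> c \<in> carrier_vec n \<Longrightarrow>
  conjugate (a - b) \<bullet> c = conjugate a \<bullet> c - conjugate b \<bullet> (c :: complex vec)"
  by (simp add: conj_minus_vec minus_scalar_prod_distrib[of _ n])
lemma ipR_add: "a \<in> carrier_vec n \<Longrightarrow> b \<in> carrier_vec n \<Longrightarrow> c \<in> carrier_vec n \<Longrightarrow>
  conjugate a \<bullet> (b + c) = conjugate a \<bullet> b + conjugate a \<bullet> (c :: complex vec)"
  by (simp add: scalar_prod_add_distrib[of _ n])
lemma ipR_minus: "a \<in> carrier_vec n \<Longrightarrow> b \<in> carrier_vec n \<Longrightarrow> c \<in> carrier_vec n \<Longrightarrow>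
  conjugate a \<bullet> (b - c) = conjugate a \<bullet> b - conjugate a \<bullet> (c :: complex vec)"
  by (simp add: scalar_prod_minus_distrib[of _ n])
lemma ipL_sm: "a \<in> carrier_vec n \<Longrightarrow> c \<in> carrier_vec n \<Longrightarrow>
  conjugate (k \<cdot>\<^sub>v a) \<bullet> c = cnj k * (conjugate a \<bullet> (c :: complex vec))"
  by (simp add: conjugate_smult_vec[of k a, simplified] smult_scalar_prod_distrib[of _ n])
lemma ipR_sm: "a \<in> carrier_vec n \<Longrightarrow> c \<in> carrier_vec n \<Longrightarrow>
  conjugate a \<bullet> (k \<cdot>\<^sub>v c) = k * (conjugate a \<bullet> (c :: complex vec))"
  by (simp add: scalar_prod_smult_distrib[of _ n])

lemma qform:
  fixes M :: "complex mat"
  assumes M: "M \<in> carrier_mat n n" and x: "x \<in> carrier_vec n"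
  shows "conjugate x \<bullet> ((M + mat_adjoint M) *\<^sub>v x) = conjugate x \<bullet> (M *\<^sub>v x) + conjugate (M *\<^sub>v x) \<bullet> x"
proof -
  have "(M + mat_adjoint M) *\<^sub>v x = M *\<^sub>v x + mat_adjoint M *\<^sub>v x"
    using M x adj_carrier[OF M] by (simp add: add_mult_distrib_mat_vec)
  then show ?thesis using M x adj_carrier[OF M] adj[OF M x x] by (simp add: ipR_add[of _ n])
qed

lemma re_q:
  fixes M :: "complex mat"
  assumes M: "M \<in> carrier_mat n n" and x: "x \<in> carrier_vec n"
  shows "Re (conjugate x \<bullet> ((M + mat_adjoint M) *\<^sub>v x)) = 2 * Re (conjugate x \<bullet> (M *\<^sub>v x))"
  using qform[OF M x] cs[of "M *\<^sub>v x" n x] M x by simp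

lemma psd_re:
  assumes "pos_semidef n P" "x \<in> carrier_vec n"
  shows "0 \<le> Re (conjugate x \<bullet> (P *\<^sub>v x))"
  using assms re_q[of P n x] unfolding pos_semidef_def herm_psd_def by force

lemma psd_kernel:
  fixes H :: "complex mat"
  assumes H: "herm_psd n H" and v: "v \<in> carrier_vec n" and z: "Re (conjugate v \<bullet> (H *\<^sub>v v)) = 0"
  shows "H *\<^sub>v v = 0\<^sub>v n"
proof (rule ccontr)
  assume ne: "H *\<^sub>v v \<noteq> 0\<^sub>v n"
  have Hc: "H \<in> carrier_mat n n" and Ha: "mat_adjoint H = H"
    and nn: "\<And>y. y \<in> carrier_vec n \<Longrightarrow> 0 \<le> Re (conjugate y \<bullet> (H *\<^sub>v y))"
    using H unfolding herm_psd_def by auto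
  define w where "w = H *\<^sub>v v"
  have w: "w \<in> carrier_vec n" using Hc v by (simp add: w_def)
  have Hw: "H *\<^sub>v w \<in> carrier_vec n" using Hc w by simp
  define b where "b = Re (conjugate w \<bullet> w)"
  define a where "a = Re (conjugate w \<bullet> (H *\<^sub>v w))"
  have a0: "0 \<le> a" using nn[OF w] by (simp add: a_def)
  have "w \<bullet>c w > 0" using ne w by (simp add: w_def)
  hence b0: "0 < b" using conjugate_vec_sprod_comm[OF w w] by (simp add: b_def less_complex_def)
  have e1: "conjugate v \<bullet> (H *\<^sub>v w) = conjugate w \<bullet> w"
    using adj[OF Hc v w] Ha by (simp add: w_def)
  have key: "0 \<le> 2 * t * b + t^2 * a" for t :: real
  proof -
    define z where "z = v + complex_of_real t \<cdot>\<^sub>v w"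
    have zc: "z \<in> carrier_vec n" using v w by (simp add: z_def)
    have Hz: "H *\<^sub>v z = w + complex_of_real t \<cdot>\<^sub>v (H *\<^sub>v w)"
      using Hc v w by (simp add: z_def mult_add_distrib_mat_vec[of _ n n] mult_mat_vec[of _ n n] w_def)
    have "conjugate z \<bullet> (H *\<^sub>v z) = conjugate v \<bullet> w + t * (conjugate v \<bullet> (H *\<^sub>v w))
       + t * (conjugate w \<bullet> w) + t * t * (conjugate w \<bullet> (H *\<^sub>v w))"
      unfolding Hz unfolding z_def using v w Hw
      by (simp add: ipL_add[of _ n] ipR_add[of _ n] ipL_sm[of _ n] ipR_sm[of _ n] algebra_simps)
    hence "Re (conjugate z \<bullet> (H *\<^sub>v z)) = 2 * t * b + t^2 * a"
      using z by (simp add: e1 a_def b_def power2_eq_square algebra_simps w_def[symmetric])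
    with nn[OF zc] show ?thesis by simp
  qed
  have "0 \<le> 2 * (- b / (a + 1)) * b + (- b / (a + 1))^2 * a" by (rule key)
  moreover have "2 * (- b / (a + 1)) * b + (- b / (a + 1))^2 * a = b^2 * (- a - 2) / (a+1)^2"
  proof -
    have a1: "a + 1 \<noteq> 0" using a0 by linarith
    show ?thesis using a1 by (simp add: power2_eq_square divide_simps) (simp add: algebra_simps)
  qed
  moreover have "b^2 * (- a - 2) / (a+1)^2 < 0" using a0 b0
    by (intro divide_neg_pos mult_pos_neg) auto
  ultimately show False by linarith
qed

lemma inv_lemma:
  fixes M :: "complex mat"
  assumes M: "M \<in> carrier_mat n n" and inj: "\<And>v. v \<in> carrier_vec n \<Longrightarrow> M *\<^sub>v v = 0\<^sub>v n \<Longrightarrow> v = 0\<^sub>v n"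
  shows "M * minv M = 1\<^sub>m n \<and> minv M * M = 1\<^sub>m n \<and> minv M \<in> carrier_mat n n"
proof -
  have "det M \<noteq> 0" using det_0_iff_vec_prod_zero[OF M] inj by auto
  from det_non_zero_imp_unit[OF M this] have U: "M \<in> Units (ring_mat TYPE(complex) n n)" .
  obtain B where B: "mat_inverse M = Some B"
    using mat_inverse(1)[OF M, of n] U by (cases "mat_inverse M") auto
  show ?thesis using mat_inverse(2)[OF M B] B by (simp add: minv_def)
qed

lemma pd_inj:
  fixes S :: "complex mat"
  assumes S: "herm_pd n S" and v: "v \<in> carrier_vec n" and z: "S *\<^sub>v v = 0\<^sub>v n"
  shows "v = 0\<^sub>v n"
  using S v z unfolding herm_pd_def by force

lemma pd_psd_inj:
  fixes S P :: "complex mat"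
  assumes S: "herm_pd n S" and P: "pos_semidef n P" and v: "v \<in> carrier_vec n"
    and z: "(S + P) *\<^sub>v v = 0\<^sub>v n"
  shows "v = 0\<^sub>v n"
proof (rule ccontr)
  assume ne: "v \<noteq> 0\<^sub>v n"
  have Sc: "S \<in> carrier_mat n n" using S unfolding herm_pd_def by auto
  have Pc: "P \<in> carrier_mat n n" using P unfolding pos_semidef_def by auto
  have "0 < Re (conjugate v \<bullet> (S *\<^sub>v v))" using S v ne unfolding herm_pd_def by auto
  moreover have "0 \<le> Re (conjugate v \<bullet> (P *\<^sub>v v))" using psd_re[OF P v] .
  moreover have "conjugate v \<bullet> ((S + P) *\<^sub>v v) = conjugate v \<bullet> (S *\<^sub>v v) + conjugate v \<bullet> (P *\<^sub>v v)"
    using Sc Pc v by (simp add: add_mult_distrib_mat_vec[of _ n n] ipR_add[of _ n])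
  ultimately have "Re (conjugate v \<bullet> (S *\<^sub>v v)) + Re (conjugate v \<bullet> (P *\<^sub>v v)) = 0"
    using z v by (metis plus_complex.sel(1) zero_complex.sel(1) scalar_prod_right_zero carrier_vec_conjugate)
  with \<open>0 < Re (conjugate v \<bullet> (S *\<^sub>v v))\<close> \<open>0 \<le> Re (conjugate v \<bullet> (P *\<^sub>v v))\<close> show False by linarith
qed

lemma cayley:
  fixes Sg S P :: "complex mat"
  assumes Sg: "Sg \<in> carrier_mat n n" and Sa: "mat_adjoint Sg = Sg" and S: "S \<in> carrier_mat n n"
    and SS1: "Sg * S = 1\<^sub>m n" and SS2: "S * Sg = 1\<^sub>m n" and P: "P \<in> carrier_mat n n"
    and z: "z \<in> carrier_vec n"
  shows "conjugate ((Sg + P) *\<^sub>v z) \<bullet> (S *\<^sub>v ((Sg + P) *\<^sub>v z))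
       - conjugate ((Sg - P) *\<^sub>v z) \<bullet> (S *\<^sub>v ((Sg - P) *\<^sub>v z))
       = 2 * (conjugate z \<bullet> (P *\<^sub>v z) + conjugate (P *\<^sub>v z) \<bullet> z)"
proof -
  define a where "a = Sg *\<^sub>v z"
  define b where "b = P *\<^sub>v z"
  have a: "a \<in> carrier_vec n" and b: "b \<in> carrier_vec n" using Sg P z by (auto simp: a_def b_def)
  have Sa': "S *\<^sub>v a \<in> carrier_vec n" "S *\<^sub>v b \<in> carrier_vec n" using S a b by auto
  have e1: "(Sg + P) *\<^sub>v z = a + b" using Sg P z by (simp add: a_def b_def add_mult_distrib_mat_vec[of _ n n])
  have e2: "(Sg - P) *\<^sub>v z = a - b" using Sg P z by (simp add: a_def b_def minus_mult_distrib_mat_vec[of _ n n])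
  have e3: "S *\<^sub>v (a + b) = S *\<^sub>v a + S *\<^sub>v b" using S a b by (simp add: mult_add_distrib_mat_vec[of _ n n])
  have e4: "S *\<^sub>v (a - b) = S *\<^sub>v a - S *\<^sub>v b" using S a b by (simp add: mult_minus_distrib_mat_vec[of _ n n])
  have c1: "conjugate a \<bullet> (S *\<^sub>v b) = conjugate z \<bullet> b"
  proof -
    have "conjugate a \<bullet> (S *\<^sub>v b) = conjugate z \<bullet> (Sg *\<^sub>v (S *\<^sub>v b))"
      using adj[OF Sg z Sa'(2)] Sa by (simp add: a_def)
    also have "Sg *\<^sub>v (S *\<^sub>v b) = b" using Sg S b SS1 by (simp flip: assoc_mult_mat_vec)
    finally show ?thesis .
  qed
  have c2: "conjugate b \<bullet> (S *\<^sub>v a) = conjugate b \<bullet> z"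
  proof -
    have "S *\<^sub>v a = z" using Sg S z SS2 unfolding a_def by (simp flip: assoc_mult_mat_vec)
    thus ?thesis by simp
  qed
  show ?thesis unfolding e1 e2 e3 e4 using a b Sa' c1 c2
    by (simp add: ipL_add[of _ n] ipR_add[of _ n] ipL_minus[of _ n] ipR_minus[of _ n] b_def[symmetric] algebra_simps)
qed

lemma Npos:
  fixes Sg S :: "complex mat"
  assumes Sg: "herm_pd n Sg" and S: "S \<in> carrier_mat n n"
    and SS1: "Sg * S = 1\<^sub>m n" and w: "w \<in> carrier_vec n" and ne: "w \<noteq> 0\<^sub>v n"
  shows "0 < Re (conjugate w \<bullet> (S *\<^sub>v w))"
proof -
  have Sgc: "Sg \<in> carrier_mat n n" and Sa: "mat_adjoint Sg = Sg" using Sg unfolding herm_pd_def by auto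
  define y where "y = S *\<^sub>v w"
  have y: "y \<in> carrier_vec n" using S w by (simp add: y_def)
  have wy: "w = Sg *\<^sub>v y" using Sgc S w SS1 unfolding y_def by (simp flip: assoc_mult_mat_vec)
  have yne: "y \<noteq> 0\<^sub>v n" using wy ne Sgc by auto
  have "conjugate w \<bullet> (S *\<^sub>v w) = conjugate y \<bullet> (Sg *\<^sub>v y)"
    using adj[OF Sgc y y] Sa by (simp add: y_def[symmetric] wy[symmetric])
  thus ?thesis using Sg y yne unfolding herm_pd_def by auto
qed

lemma cnj_mult_self: "cnj (c::complex) * c = complex_of_real ((cmod c)^2)"
  using complex_norm_square[of c] by (metis mult.commute)

lemma mz: "(M :: complex mat) \<in> carrier_mat n n \<Longrightarrow> M *\<^sub>v 0\<^sub>v n = 0\<^sub>v n"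
  by (intro eq_vecI) (auto simp: scalar_prod_right_zero[of _ n])

lemma cms2: "(c::complex) * cnj c = (complex_of_real (cmod c))^2"
  by (metis complex_norm_square of_real_power)

theorem theorem3p7:
  fixes n :: nat and A P1 P2 \<Sigma> :: "complex mat"
  assumes "0 < n" and "A \<in> carrier_mat n n" and "invertible_mat A" and "pos_def n A"
    and "A = P1 + P2"
    and "pos_semidef n P1" and "pos_semidef n P2"
    and "herm_pd n \<Sigma>"
    and "ev (Gamma_PPS \<Sigma> P1 P2) \<inter> mat_kernel (P1 + mat_adjoint P1) \<subseteq> mat_kernel P1
         \<or> ev (Gamma_PPS \<Sigma> P1 P2) \<subseteq> mat_kernel P1 \<union> mat_kernel (P2 + mat_adjoint P2)"
  shows "spectral_radius (Gamma_PPS \<Sigma> P1 P2) < 1"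
proof -
  note n = assms(1)
  note AP = assms(5) and psd1 = assms(6) and psd2 = assms(7) and Spd = assms(8) and cond = assms(9)
  have P1c: "P1 \<in> carrier_mat n n" using psd1 unfolding pos_semidef_def by auto
  have P2c: "P2 \<in> carrier_mat n n" using psd2 unfolding pos_semidef_def by auto
  have Sgc: "\<Sigma> \<in> carrier_mat n n" and Sa: "mat_adjoint \<Sigma> = \<Sigma>" using Spd unfolding herm_pd_def by auto
  have H1: "herm_psd n (P1 + mat_adjoint P1)" using psd1 unfolding pos_semidef_def by auto
  have H2: "herm_psd n (P2 + mat_adjoint P2)" using psd2 unfolding pos_semidef_def by auto
  have H1c: "P1 + mat_adjoint P1 \<in> carrier_mat n n" using P1c adj_carrier[OF P1c] by simp
  have H2c: "P2 + mat_adjoint P2 \<in> carrier_mat n n" using P2c adj_carrier[OF P2c] by simp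
  define S where "S = minv \<Sigma>"
  have Sinv: "\<Sigma> * S = 1\<^sub>m n \<and> S * \<Sigma> = 1\<^sub>m n \<and> S \<in> carrier_mat n n"
    unfolding S_def by (rule inv_lemma[OF Sgc]) (rule pd_inj[OF Spd])
  hence SS1: "\<Sigma> * S = 1\<^sub>m n" and SS2: "S * \<Sigma> = 1\<^sub>m n" and Sc: "S \<in> carrier_mat n n" by auto
  define B1 where "B1 = minv (\<Sigma> + P1)"
  define B2 where "B2 = minv (\<Sigma> + P2)"
  have B1i: "(\<Sigma> + P1) * B1 = 1\<^sub>m n \<and> B1 * (\<Sigma> + P1) = 1\<^sub>m n \<and> B1 \<in> carrier_mat n n"
    unfolding B1_def by (rule inv_lemma) (use Sgc P1c pd_psd_inj[OF Spd psd1] in auto)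
  have B2i: "(\<Sigma> + P2) * B2 = 1\<^sub>m n \<and> B2 * (\<Sigma> + P2) = 1\<^sub>m n \<and> B2 \<in> carrier_mat n n"
    unfolding B2_def by (rule inv_lemma) (use Sgc P2c pd_psd_inj[OF Spd psd2] in auto)
  have B1c: "B1 \<in> carrier_mat n n" and B2c: "B2 \<in> carrier_mat n n" using B1i B2i by auto
  define G where "G = Gamma_PPS \<Sigma> P1 P2"
  have G: "G = B1 * (\<Sigma> - P2) * B2 * (\<Sigma> - P1)" unfolding G_def Gamma_PPS_def B1_def B2_def by simp
  have Gc: "G \<in> carrier_mat n n" unfolding G using B1c B2c Sgc P1c P2c by auto
  have main: "cmod l < 1" if evl: "eigenvalue G l" for l
  proof (rule ccontr)
    assume nl: "\<not> cmod l < 1"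
    obtain x where exx: "eigenvector G x l" using evl unfolding eigenvalue_def by auto
    hence x: "x \<in> carrier_vec n" and xne: "x \<noteq> 0\<^sub>v n" and Gx: "G *\<^sub>v x = l \<cdot>\<^sub>v x"
      using Gc unfolding eigenvector_def by auto
    have xev: "x \<in> ev G" using exx unfolding ev_def by auto
    define a where "a = (\<Sigma> + P1) *\<^sub>v x"
    define v where "v = (\<Sigma> - P1) *\<^sub>v x"
    define u where "u = B2 *\<^sub>v v"
    have a: "a \<in> carrier_vec n" and v: "v \<in> carrier_vec n" and u: "u \<in> carrier_vec n"
      using Sgc P1c B2c x by (auto simp: a_def v_def u_def intro!: mult_mat_vec_carrier add_carrier_mat minus_carrier_mat)
    have m1: "\<Sigma> - P2 \<in> carrier_mat n n" and m2: "\<Sigma> - P1 \<in> carrier_mat n n" using Sgc P1c P2c by auto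
    have vc: "(\<Sigma> - P1) *\<^sub>v x \<in> carrier_vec n" using m2 x by auto
    have Gx2: "G *\<^sub>v x = B1 *\<^sub>v ((\<Sigma> - P2) *\<^sub>v u)"
    proof -
      have "G *\<^sub>v x = (B1 * (\<Sigma> - P2) * B2) *\<^sub>v ((\<Sigma> - P1) *\<^sub>v x)" unfolding G
        by (rule assoc_mult_mat_vec[of _ n n _ n]) (use B1c B2c m1 m2 x in auto)
      also have "\<dots> = (B1 * (\<Sigma> - P2)) *\<^sub>v (B2 *\<^sub>v ((\<Sigma> - P1) *\<^sub>v x))"
        by (rule assoc_mult_mat_vec[of _ n n _ n]) (use B1c B2c m1 vc in auto)
      also have "\<dots> = B1 *\<^sub>v ((\<Sigma> - P2) *\<^sub>v (B2 *\<^sub>v ((\<Sigma> - P1) *\<^sub>v x)))"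
        by (rule assoc_mult_mat_vec[of _ n n _ n]) (use B1c B2c m1 vc in auto)
      finally show ?thesis unfolding u_def v_def .
    qed
    have d: "(\<Sigma> - P2) *\<^sub>v u = l \<cdot>\<^sub>v a"
    proof -
      have "(\<Sigma> + P1) *\<^sub>v (G *\<^sub>v x) = ((\<Sigma> + P1) * B1) *\<^sub>v ((\<Sigma> - P2) *\<^sub>v u)"
        unfolding Gx2 by (rule assoc_mult_mat_vec[symmetric, of _ n n _ n]) (use B1c Sgc P1c m1 u in auto)
      also have "\<dots> = (\<Sigma> - P2) *\<^sub>v u" using B1i m1 u by (simp add: one_mult_mat_vec[of _ n])
      finally have "(\<Sigma> - P2) *\<^sub>v u = (\<Sigma> + P1) *\<^sub>v (l \<cdot>\<^sub>v x)" unfolding Gx by simp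
      also have "\<dots> = l \<cdot>\<^sub>v a" unfolding a_def using Sgc P1c x by (simp add: mult_mat_vec[of _ n n])
      finally show ?thesis .
    qed
    have cpu: "(\<Sigma> + P2) *\<^sub>v u = v"
    proof -
      have "(\<Sigma> + P2) *\<^sub>v u = ((\<Sigma> + P2) * B2) *\<^sub>v v" unfolding u_def
        by (rule assoc_mult_mat_vec[symmetric, of _ n n _ n]) (use B2c Sgc P2c v in auto)
      thus ?thesis using B2i v by simp
    qed
    define N where "N w = conjugate w \<bullet> (S *\<^sub>v w)" for w
    have cay1: "N a - N v = 2 * (conjugate x \<bullet> (P1 *\<^sub>v x) + conjugate (P1 *\<^sub>v x) \<bullet> x)"
      unfolding N_def a_def v_def by (rule cayley[OF Sgc Sa Sc SS1 SS2 P1c x])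
    have cay2: "N v - N (l \<cdot>\<^sub>v a) = 2 * (conjugate u \<bullet> (P2 *\<^sub>v u) + conjugate (P2 *\<^sub>v u) \<bullet> u)"
      unfolding N_def cpu[symmetric] d[symmetric] by (rule cayley[OF Sgc Sa Sc SS1 SS2 P2c u])
    have Nla: "N (l \<cdot>\<^sub>v a) = complex_of_real ((cmod l)^2) * N a"
      unfolding N_def using Sc a by (simp add: mult_mat_vec[of _ n n] ipL_sm[of _ n] ipR_sm[of _ n] cms2)
    define r1 where "r1 = Re (conjugate x \<bullet> (P1 *\<^sub>v x))"
    define r2 where "r2 = Re (conjugate u \<bullet> (P2 *\<^sub>v u))"
    have r10: "0 \<le> r1" unfolding r1_def by (rule psd_re[OF psd1 x])
    have r20: "0 \<le> r2" unfolding r2_def by (rule psd_re[OF psd2 u])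
    have ane: "a \<noteq> 0\<^sub>v n" using pd_psd_inj[OF Spd psd1 x] xne unfolding a_def by auto
    have Na: "0 < Re (N a)" unfolding N_def by (rule Npos[OF Spd Sc SS1 a ane])
    have e1: "Re (N a) - Re (N v) = 4 * r1"
      using arg_cong[OF cay1, of Re] cs[of "P1 *\<^sub>v x" n x] P1c x unfolding r1_def by simp
    have e2: "Re (N v) - (cmod l)^2 * Re (N a) = 4 * r2"
      using arg_cong[OF cay2, of Re] cs[of "P2 *\<^sub>v u" n u] P2c u unfolding r2_def Nla by simp
    have "1 \<le> (cmod l)^2" using nl by (simp add: one_le_power)
    hence "Re (N a) \<le> (cmod l)^2 * Re (N a)" using Na by (simp add: mult_right_mono[of 1 _ "Re (N a)", simplified])
    hence r1z: "r1 = 0" and r2z: "r2 = 0" using e1 e2 r10 r20 by linarith+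
    have xP2: "Re (conjugate x \<bullet> (P2 *\<^sub>v x)) = 0"
    proof -
      have "P1 *\<^sub>v x = 0\<^sub>v n \<or> (P2 + mat_adjoint P2) *\<^sub>v x = 0\<^sub>v n"
      proof (cases "ev G \<inter> mat_kernel (P1 + mat_adjoint P1) \<subseteq> mat_kernel P1")
        case True
        have "Re (conjugate x \<bullet> ((P1 + mat_adjoint P1) *\<^sub>v x)) = 0"
          using re_q[OF P1c x] r1z unfolding r1_def by simp
        from psd_kernel[OF H1 x this] have "x \<in> mat_kernel (P1 + mat_adjoint P1)"
          using H1c x by (auto simp: mat_kernel_def)
        with True xev have "x \<in> mat_kernel P1" by auto
        thus ?thesis using P1c by (auto simp: mat_kernel_def)
      next
        case False
        with cond have "x \<in> mat_kernel P1 \<union> mat_kernel (P2 + mat_adjoint P2)" using xev unfolding G_def by auto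
        thus ?thesis using P1c H2c by (auto simp: mat_kernel_def)
      qed
      thus ?thesis
      proof
        assume "(P2 + mat_adjoint P2) *\<^sub>v x = 0\<^sub>v n"
        thus ?thesis using re_q[OF P2c x] x by simp
      next
        assume P1x: "P1 *\<^sub>v x = 0\<^sub>v n"
        define c where "c = (1 + l) / 2"
        have sa: "a = \<Sigma> *\<^sub>v x" unfolding a_def using Sgc P1c x P1x by (simp add: add_mult_distrib_mat_vec[of _ n n])
        have sv: "v = \<Sigma> *\<^sub>v x" unfolding v_def using Sgc P1c x P1x by (simp add: minus_mult_distrib_mat_vec[of _ n n])
        have f1: "\<Sigma> *\<^sub>v u + P2 *\<^sub>v u = \<Sigma> *\<^sub>v x"
          using cpu sv Sgc P2c u by (simp add: add_mult_distrib_mat_vec[of _ n n])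
        have f2: "\<Sigma> *\<^sub>v u - P2 *\<^sub>v u = l \<cdot>\<^sub>v (\<Sigma> *\<^sub>v x)"
          using d sa Sgc P2c u by (simp add: minus_mult_distrib_mat_vec[of _ n n])
        have "\<Sigma> *\<^sub>v (u - c \<cdot>\<^sub>v x) = 0\<^sub>v n"
        proof (rule eq_vecI)
          fix i assume i: "i < dim_vec (0\<^sub>v n :: complex vec)"
          have g1: "(\<Sigma> *\<^sub>v u) $ i + (P2 *\<^sub>v u) $ i = (\<Sigma> *\<^sub>v x) $ i"
            using arg_cong[OF f1, of "\<lambda>w. w $ i"] i Sgc P2c by simp
          have g2: "(\<Sigma> *\<^sub>v u) $ i - (P2 *\<^sub>v u) $ i = l * (\<Sigma> *\<^sub>v x) $ i"
            using arg_cong[OF f2, of "\<lambda>w. w $ i"] i Sgc P2c by simp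
          have "\<Sigma> *\<^sub>v (u - c \<cdot>\<^sub>v x) = \<Sigma> *\<^sub>v u - c \<cdot>\<^sub>v (\<Sigma> *\<^sub>v x)"
            using Sgc u x by (simp add: mult_minus_distrib_mat_vec[of _ n n] mult_mat_vec[of _ n n])
          moreover have "(\<Sigma> *\<^sub>v u) $ i = c * (\<Sigma> *\<^sub>v x) $ i"
            using g1 g2 unfolding c_def by (simp add: field_simps)
          ultimately show "(\<Sigma> *\<^sub>v (u - c \<cdot>\<^sub>v x)) $ i = 0\<^sub>v n $ i" using i Sgc by simp
        qed (use Sgc in simp)
        hence Z: "u - c \<cdot>\<^sub>v x = 0\<^sub>v n" using pd_inj[OF Spd] u x by simp
        have uc: "u = c \<cdot>\<^sub>v x"
        proof (rule eq_vecI)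
          fix i assume i: "i < dim_vec (c \<cdot>\<^sub>v x)"
          have "(u - c \<cdot>\<^sub>v x) $ i = 0\<^sub>v n $ i" using Z by simp
          thus "u $ i = (c \<cdot>\<^sub>v x) $ i" using i u x by simp
        qed (use u x in simp)
        have cne: "c \<noteq> 0"
        proof
          assume "c = 0"
          hence "u = 0\<^sub>v n" using uc x by auto
          hence "\<Sigma> *\<^sub>v x = 0\<^sub>v n" using f1 Sgc P2c by (simp add: mz)
          thus False using pd_inj[OF Spd x] xne by simp
        qed
        have "r2 = (cmod c)^2 * Re (conjugate x \<bullet> (P2 *\<^sub>v x))"
          unfolding r2_def uc using P2c x
          by (simp add: mult_mat_vec[of _ n n] ipL_sm[of _ n] ipR_sm[of _ n] mult.assoc[symmetric] cnj_mult_self power2_eq_square cmod_power2[unfolded power2_eq_square])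
        thus ?thesis using r2z cne by simp
      qed
    qed
    have "0 < Re (conjugate x \<bullet> ((A + mat_adjoint A) *\<^sub>v x))"
      using assms(4) x xne unfolding pos_def_def herm_pd_def by auto
    also have "\<dots> = 2 * Re (conjugate x \<bullet> (A *\<^sub>v x))" by (rule re_q[OF assms(2) x])
    also have "\<dots> = 2 * (r1 + Re (conjugate x \<bullet> (P2 *\<^sub>v x)))"
      unfolding AP r1_def using P1c P2c x by (simp add: add_mult_distrib_mat_vec[of _ n n] ipR_add[of _ n])
    finally show False using r1z xP2 by simp
  qed
  have "spectral_radius G \<in> cmod ` spectrum G" by (rule spectral_radius_mem_max(1)[OF Gc n])
  then obtain l where "eigenvalue G l" "spectral_radius G = cmod l" unfolding spectrum_def by auto
  with main show ?thesis unfolding G_def by simp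
qed

end
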